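(* For $\mu\ge2$, the generating series $W_\mu(q)=\sum_g w_{\mu,g}q^g$, where $w_{\mu,g}$ is the number of weakly admissible compositions of $g$ whose maximal part equals $\mu$, is $$W_\mu(q)=\frac{1+\sum_{i=\lceil\mu/2\rceil}^{\mu}q^i}{1-I_\mu}\;q^\mu\;\frac{1+\sum_{i=\lfloor\mu/2\rfloor}^{\mu-1}q^i}{1-I_{\mu-1}},$$ where for $n\ge1$, $I_n=\sum_{1\le a,b\le n,\ a+b\ge n}q^{a+b}=q^n\bigl(-2+\sum_{i=0}^n(n+1-i)q^i\bigr)$.
   Context: A composition $x_1+\cdots+x_{m-1}$ of $g=\sum x_i$ (parts positive integers) with maximum $\mu$ has a last maximal part $x_l$, i.e. $x_1,\dots,x_{l-1}\le x_l=\mu$ and $x_{l+1},\dots,x_{m-1}<\mu$. It is weakly admissible if $x_l\le x_i+x_{l-i}$ for all $1\le i\le l-1$ and $x_l\le 1+x_{l+i}+x_{m-i}$ for all $1\le i\le m-1-l$. *)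

theory Defs
  imports "HOL-Computational_Algebra.Formal_Power_Series"
begin

text \<open>A composition x_1 + ... + x_{m-1} of g is a nonempty list of positive integers
  (the list has length m-1); entry x_k is xs ! (k-1).\<close>

definition composition :: "nat \<Rightarrow> nat list \<Rightarrow> bool" where
  "composition g xs \<longleftrightarrow> xs \<noteq> [] \<and> (\<forall>x\<in>set xs. 0 < x) \<and> sum_list xs = g"

definition last_max_pos :: "nat list \<Rightarrow> nat" where
  "last_max_pos xs = (GREATEST k. k \<in> {1..length xs} \<and> xs ! (k - 1) = Max (set xs))"

definition weakly_admissible :: "nat list \<Rightarrow> bool" where
  "weakly_admissible xs \<longleftrightarrow>
     (let n = length xs; l = last_max_pos xs; x = (\<lambda>k. xs ! (k - 1)) in
       (\<forall>i\<in>{1..l - 1}. x l \<le> x i + x (l - i)) \<and>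
       (\<forall>i\<in>{1..n - l}. x l \<le> 1 + x (l + i) + x (n + 1 - i)))"

definition w_count :: "nat \<Rightarrow> nat \<Rightarrow> nat" where
  "w_count \<mu> g = card {xs. composition g xs \<and> weakly_admissible xs \<and> Max (set xs) = \<mu>}"

definition W_series :: "nat \<Rightarrow> rat fps" where
  "W_series \<mu> = Abs_fps (\<lambda>g. of_nat (w_count \<mu> g))"

definition I_series :: "nat \<Rightarrow> rat fps" where
  "I_series n = (\<Sum>(a,b)\<in>{(a,b). a \<in> {1..n} \<and> b \<in> {1..n} \<and> a + b \<ge> n}. fps_X ^ (a + b))"

end

theory Submission imports Defs begin

definition wser :: "'a set \<Rightarrow> ('a \<Rightarrow> nat) \<Rightarrow> rat fps" where
  "wser A w = Abs_fps (\<lambda>g. of_nat (card {x\<in>A. w x = g}))"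

definition ffib :: "'a set \<Rightarrow> ('a \<Rightarrow> nat) \<Rightarrow> bool" where
  "ffib A w \<longleftrightarrow> (\<forall>g. finite {x\<in>A. w x = g})"

lemma wser_bij:
  assumes "bij_betw h A B" "\<And>x. x \<in> A \<Longrightarrow> wB (h x) = wA x"
  shows "wser A wA = wser B wB"
proof -
  have "card {y\<in>B. wB y = g} = card {x\<in>A. wA x = g}" for g
  proof -
    have e: "{y\<in>B. wB y = g} = h ` {x\<in>A. wA x = g}"
      using assms bij_betw_imp_surj_on[OF assms(1)] by auto
    have "inj_on h {x\<in>A. wA x = g}"
      using bij_betw_imp_inj_on[OF assms(1)] by (rule inj_on_subset) auto
    then show ?thesis unfolding e by (rule card_image)
  qed
  then show ?thesis unfolding wser_def by simp
qed

lemma wser_Un: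
  assumes "A \<inter> B = {}" "ffib A w" "ffib B w"
  shows "wser (A \<union> B) w = wser A w + wser B w"
proof -
  have "card {x\<in>A\<union>B. w x = g} = card {x\<in>A. w x = g} + card {x\<in>B. w x = g}" for g
  proof -
    have "{x\<in>A\<union>B. w x = g} = {x\<in>A. w x = g} \<union> {x\<in>B. w x = g}" by auto
    then show ?thesis using assms unfolding ffib_def by (simp add: card_Un_disjoint disjoint_iff)
  qed
  then show ?thesis unfolding wser_def by (simp add: fps_eq_iff)
qed

lemma wser_prod:
  assumes "ffib A wa" "ffib B wb"
  shows "wser (A \<times> B) (\<lambda>(a,b). wa a + wb b) = wser A wa * wser B wb"
proof -
  have "card {p\<in>A\<times>B. (\<lambda>(a,b). wa a + wb b) p = g} =
        (\<Sum>i=0..g. card {x\<in>A. wa x = i} * card {y\<in>B. wb y = g - i})" for g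
  proof -
    have e: "{p\<in>A\<times>B. (\<lambda>(a,b). wa a + wb b) p = g} =
       (\<Union>i\<in>{0..g}. {x\<in>A. wa x = i} \<times> {y\<in>B. wb y = g - i})" by auto
    have "card (\<Union>i\<in>{0..g}. {x\<in>A. wa x = i} \<times> {y\<in>B. wb y = g - i}) =
       (\<Sum>i=0..g. card ({x\<in>A. wa x = i} \<times> {y\<in>B. wb y = g - i}))"
      by (rule card_UN_disjoint) (use assms in \<open>auto simp: ffib_def\<close>)
    then show ?thesis unfolding e by (simp add: card_cartesian_product)
  qed
  then show ?thesis unfolding wser_def by (simp add: fps_eq_iff fps_mult_nth)
qed

lemma wser_finite:
  assumes "finite A"
  shows "wser A w = (\<Sum>x\<in>A. fps_X ^ w x)"
proof -
  have "(\<Sum>x\<in>A. fps_nth (fps_X ^ w x :: rat fps) g) = of_nat (card {x\<in>A. w x = g})" for g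
  proof -
    have "(\<Sum>x\<in>A. fps_nth (fps_X ^ w x :: rat fps) g) = (\<Sum>x\<in>A. of_bool (w x = g))"
      by (rule sum.cong) auto
    also have "\<dots> = of_nat (card {x\<in>A. w x = g})" using assms
      by (simp add: Int_def conj_commute)
    finally show ?thesis .
  qed
  then show ?thesis unfolding wser_def by (simp add: fps_eq_iff fps_sum_nth)
qed

lemma wser_shift:
  "wser A (\<lambda>x. w x + c) = fps_X ^ c * wser A w"
proof -
  have "card {x\<in>A. w x + c = g} = (if g < c then 0 else card {x\<in>A. w x = g - c})" for g
  proof (cases "g < c")
    case True then have "{x\<in>A. w x + c = g} = {}" by auto
    then show ?thesis using True by simp
  next
    case False then have "{x\<in>A. w x + c = g} = {x\<in>A. w x = g - c}" by auto
    then show ?thesis using False by simp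
  qed
  then show ?thesis unfolding wser_def by (simp add: fps_eq_iff fps_X_power_mult_nth)
qed

lemma ffib_mono:
  assumes "ffib A w" "B \<subseteq> A" shows "ffib B w"
  unfolding ffib_def
proof
  fix g
  have "{x\<in>B. w x = g} \<subseteq> {x\<in>A. w x = g}" using assms(2) by blast
  moreover have "finite {x\<in>A. w x = g}" using assms(1) unfolding ffib_def by blast
  ultimately show "finite {x\<in>B. w x = g}" by (rule finite_subset)
qed

lemma length_le_sum: "\<forall>y\<in>set ys. 0 < (y::nat) \<Longrightarrow> length ys \<le> sum_list ys"
  by (induction ys) auto

lemma ffib_pos: "ffib {ys. \<forall>y\<in>set ys. 0 < (y::nat)} sum_list"
  unfolding ffib_def
proof
  fix g
  have "{ys\<in>{ys. \<forall>y\<in>set ys. 0 < (y::nat)}. sum_list ys = g} \<subseteq> {xs. set xs \<subseteq> {0..g} \<and> length xs \<le> g}"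
  proof
    fix ys assume "ys \<in> {ys\<in>{ys. \<forall>y\<in>set ys. 0 < (y::nat)}. sum_list ys = g}"
    then have p: "\<forall>y\<in>set ys. 0 < y" and s: "sum_list ys = g" by auto
    have "set ys \<subseteq> {0..g}" using s member_le_sum_list[of _ ys] by auto
    moreover have "length ys \<le> g" using length_le_sum[OF p] s by simp
    ultimately show "ys \<in> {xs. set xs \<subseteq> {0..g} \<and> length xs \<le> g}" by simp
  qed
  then show "finite {ys\<in>{ys. \<forall>y\<in>set ys. 0 < (y::nat)}. sum_list ys = g}"
    by (rule finite_subset) (rule finite_lists_length_le, simp)
qed

lemma ffib_posI: "(\<And>ys y. ys \<in> A \<Longrightarrow> y \<in> set ys \<Longrightarrow> 0 < (y::nat)) \<Longrightarrow> ffib A sum_list"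
  by (rule ffib_mono[OF ffib_pos]) blast

definition pal :: "nat \<Rightarrow> nat \<Rightarrow> nat list set" where
  "pal M T = {ys. set ys \<subseteq> {1..M} \<and> (\<forall>(u,v)\<in>set (zip ys (rev ys)). T \<le> u + v)}"

definition pairs :: "nat \<Rightarrow> nat \<Rightarrow> (nat \<times> nat) set" where
  "pairs M T = {(a,b). a \<in> {1..M} \<and> b \<in> {1..M} \<and> a + b \<ge> T}"

lemma pal_cons_snoc:
  "a # ys @ [b] \<in> pal M T \<longleftrightarrow> (a,b) \<in> pairs M T \<and> ys \<in> pal M T"
proof -
  have z: "zip (a # ys @ [b]) (rev (a # ys @ [b])) = (a,b) # zip ys (rev ys) @ [(b,a)]"
    by simp
  show ?thesis unfolding pal_def pairs_def z by (auto simp: add.commute)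
qed

lemma pal_decomp:
  "pal M T = {[]} \<union> (\<lambda>y. [y]) ` {y. 1 \<le> y \<and> y \<le> M \<and> T \<le> y + y}
     \<union> (\<lambda>((a,b),ys). a # ys @ [b]) ` (pairs M T \<times> pal M T)" (is "_ = ?R")
proof (intro equalityI subsetI)
  fix xs assume xs: "xs \<in> pal M T"
  show "xs \<in> ?R"
  proof (cases xs)
    case Nil then show ?thesis by simp
  next
    case (Cons a ys)
    show ?thesis
    proof (cases ys rule: rev_cases)
      case Nil
      then have "xs = [a]" using Cons by simp
      moreover have "1 \<le> a \<and> a \<le> M \<and> T \<le> a + a" using xs \<open>xs = [a]\<close> by (simp add: pal_def)
      ultimately show ?thesis by blast
    next
      case (snoc zs b)
      then have e: "xs = a # zs @ [b]" using Cons by simp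
      then have "(a,b) \<in> pairs M T" "zs \<in> pal M T" using xs pal_cons_snoc[of a zs b M T] by auto
      then have "xs \<in> (\<lambda>((a,b),ys). a # ys @ [b]) ` (pairs M T \<times> pal M T)"
        unfolding e by (intro image_eqI[where x="((a,b),zs)"]) auto
      then show ?thesis by blast
    qed
  qed
next
  fix xs assume "xs \<in> ?R"
  then consider "xs = []" | y where "xs = [y]" "1 \<le> y \<and> y \<le> M \<and> T \<le> y + y"
    | a b ys where "xs = a # ys @ [b]" "(a,b) \<in> pairs M T" "ys \<in> pal M T" by (auto split: prod.splits)
  then show "xs \<in> pal M T"
  proof cases
    case 1 then show ?thesis by (simp add: pal_def)
  next
    case 2 then show ?thesis by (simp add: pal_def)
  next
    case 3 then show ?thesis using pal_cons_snoc by simp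
  qed
qed

lemma finite_pairs: "finite (pairs M T)"
  by (rule finite_subset[of _ "{1..M} \<times> {1..M}"]) (auto simp: pairs_def)

lemma ffib_finite: "finite A \<Longrightarrow> ffib A w"
  unfolding ffib_def by simp

lemma pal_series:
  fixes M T :: nat
  defines "Mid \<equiv> {y. 1 \<le> y \<and> y \<le> M \<and> T \<le> y + y}"
    and "Ip \<equiv> (\<Sum>(a,b)\<in>pairs M T. fps_X ^ (a + b) :: rat fps)"
  shows "wser (pal M T) sum_list = (1 + (\<Sum>y\<in>Mid. fps_X ^ y)) / (1 - Ip)"
proof -
  define P where "P = wser (pal M T) sum_list"
  define S where "S = (\<lambda>y. [y::nat]) ` Mid"
  define H where "H = (\<lambda>((a,b),ys). a # ys @ [b::nat]) ` (pairs M T \<times> pal M T)"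
  have dec: "pal M T = ({[]} \<union> S) \<union> H"
    using pal_decomp[of M T] unfolding S_def H_def Mid_def by simp
  have posP: "ffib (pal M T) sum_list" by (rule ffib_posI) (auto simp: pal_def)
  have ff1: "ffib ({[]} \<union> S) sum_list" "ffib {[]} sum_list" "ffib S sum_list" "ffib H sum_list"
    by (rule ffib_mono[OF posP]; use dec in blast)+
  have d1: "({[]} \<union> S) \<inter> H = {}" unfolding S_def H_def by auto
  have d2: "{[]} \<inter> S = {}" unfolding S_def by auto
  have e0: "wser {[]} sum_list = 1" by (simp add: wser_finite)
  have eS: "wser S sum_list = (\<Sum>y\<in>Mid. fps_X ^ y)"
  proof -
    have "wser Mid (\<lambda>y. y) = wser S sum_list"
      by (rule wser_bij[where h="\<lambda>y. [y]"]) (auto simp: S_def bij_betw_def inj_on_def)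
    moreover have "finite Mid" by (rule finite_subset[of _ "{1..M}"]) (auto simp: Mid_def)
    ultimately show ?thesis by (simp add: wser_finite)
  qed
  have eH: "wser H sum_list = Ip * P"
  proof -
    have inj: "inj_on (\<lambda>((a,b),ys). a # ys @ [b::nat]) (pairs M T \<times> pal M T)"
      by (auto simp: inj_on_def)
    have "wser (pairs M T \<times> pal M T) (\<lambda>(p,ys). (\<lambda>(a,b). a + b) p + sum_list ys) = wser H sum_list"
      by (rule wser_bij[where h="\<lambda>((a,b),ys). a # ys @ [b::nat]"])
        (use inj in \<open>auto simp: H_def bij_betw_def\<close>)
    moreover have "wser (pairs M T \<times> pal M T) (\<lambda>(p,ys). (\<lambda>(a,b). a + b) p + sum_list ys)
        = wser (pairs M T) (\<lambda>(a,b). a + b) * P"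
      unfolding P_def by (rule wser_prod[OF ffib_finite[OF finite_pairs] posP])
    moreover have "wser (pairs M T) (\<lambda>(a,b). a + b) = Ip"
      unfolding Ip_def by (simp add: wser_finite[OF finite_pairs] case_prod_unfold)
    ultimately show ?thesis by simp
  qed
  have PE: "P = 1 + (\<Sum>y\<in>Mid. fps_X ^ y) + Ip * P"
  proof -
    have "P = wser (({[]} \<union> S) \<union> H) sum_list" unfolding P_def by (subst dec) (rule refl)
    also have "\<dots> = wser ({[]} \<union> S) sum_list + wser H sum_list"
      by (rule wser_Un[OF d1 ff1(1) ff1(4)])
    also have "wser ({[]} \<union> S) sum_list = wser {[]} sum_list + wser S sum_list"
      by (rule wser_Un[OF d2 ff1(2) ff1(3)])
    finally show ?thesis using e0 eS eH by simp
  qed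
  have I0: "fps_nth Ip 0 = 0"
    unfolding Ip_def by (auto simp: fps_sum_nth pairs_def intro!: sum.neutral)
  have u: "fps_nth (1 - Ip) 0 \<noteq> 0" using I0 by simp
  have "P * (1 - Ip) = 1 + (\<Sum>y\<in>Mid. fps_X ^ y)"
    using PE by (simp add: algebra_simps)
  then have "P = (1 + (\<Sum>y\<in>Mid. fps_X ^ y)) * inverse (1 - Ip)"
    by (metis inverse_mult_eq_1'[OF u] mult.assoc mult.right_neutral)
  then show ?thesis unfolding P_def using fps_divide_unit[OF u] by simp
qed

lemma zip_rev_iff:
  "(\<forall>(u,v)\<in>set (zip ys (rev ys)). P u v) \<longleftrightarrow> (\<forall>j<length ys. P (ys!j) (ys!(length ys - Suc j)))"
proof
  assume H: "\<forall>(u,v)\<in>set (zip ys (rev ys)). P u v"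
  show "\<forall>j<length ys. P (ys!j) (ys!(length ys - Suc j))"
  proof (intro allI impI)
    fix j assume j: "j < length ys"
    have "(ys!j, rev ys ! j) \<in> set (zip ys (rev ys))" using j by (auto simp: set_zip)
    then show "P (ys!j) (ys!(length ys - Suc j))" using H j by (auto simp: rev_nth)
  qed
next
  assume H: "\<forall>j<length ys. P (ys!j) (ys!(length ys - Suc j))"
  show "\<forall>(u,v)\<in>set (zip ys (rev ys)). P u v" using H by (auto simp: set_zip rev_nth)
qed

lemma nth_mid1: "j < length ys \<Longrightarrow> (ys @ m # zs) ! j = ys ! j"
  by (simp add: nth_append)
lemma nth_mid2: "(ys @ m # zs) ! (length ys) = m"
  by simp
lemma nth_mid3: "(ys @ m # zs) ! (length ys + Suc k) = zs ! k"
  by (simp add: nth_append)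

lemma decomp_props:
  assumes xs: "xs = ys @ m # zs" and y: "\<forall>y\<in>set ys. y \<le> m" and z: "\<forall>z\<in>set zs. z < m"
  shows "Max (set xs) = m" "last_max_pos xs = Suc (length ys)"
proof -
  have le: "\<forall>x\<in>set xs. x \<le> m" using xs y z by (auto simp: less_imp_le)
  have mem: "m \<in> set xs" using xs by simp
  show mx: "Max (set xs) = m" using le mem by (intro Max_eqI) auto
  show "last_max_pos xs = Suc (length ys)"
    unfolding last_max_pos_def mx
  proof (rule Greatest_equality)
    show "Suc (length ys) \<in> {1..length xs} \<and> xs ! (Suc (length ys) - 1) = m"
      using xs by simp
  next
    fix k assume k: "k \<in> {1..length xs} \<and> xs ! (k - 1) = m"
    show "k \<le> Suc (length ys)"
    proof (rule ccontr)
      assume "\<not> k \<le> Suc (length ys)"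
      then have kk: "Suc (length ys) < k" by simp
      define j where "j = k - 2 - length ys"
      have j: "k - 1 = length ys + Suc j" using kk unfolding j_def by simp
      then have "j < length zs" using k xs by auto
      then have "zs ! j < m" using z by auto
      then show False using k j xs nth_mid3[of ys m zs j] by simp
    qed
  qed
qed

lemma wa_iff:
  assumes xs: "xs = ys @ m # zs" and y: "\<forall>y\<in>set ys. y \<le> m" and z: "\<forall>z\<in>set zs. z < m"
  shows "weakly_admissible xs \<longleftrightarrow>
    (\<forall>(u,v)\<in>set (zip ys (rev ys)). m \<le> u + v) \<and> (\<forall>(u,v)\<in>set (zip zs (rev zs)). m - 1 \<le> u + v)"
proof -
  note lm = decomp_props(2)[OF assms]
  define L where "L = length ys"
  define K where "K = length zs"
  have n: "length xs = L + 1 + K" using xs by (simp add: L_def K_def)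
  have xl: "xs ! L = m" using xs by (simp add: L_def)
  have left: "(\<forall>i\<in>{1..Suc L - 1}. xs ! (Suc L - 1) \<le> xs ! (i - 1) + xs ! (Suc L - i - 1))
      \<longleftrightarrow> (\<forall>j<L. m \<le> ys ! j + ys ! (L - Suc j))"
  proof
    assume H: "\<forall>i\<in>{1..Suc L - 1}. xs ! (Suc L - 1) \<le> xs ! (i - 1) + xs ! (Suc L - i - 1)"
    show "\<forall>j<L. m \<le> ys ! j + ys ! (L - Suc j)"
    proof (intro allI impI)
      fix j assume j: "j < L"
      have "xs ! (Suc L - 1) \<le> xs ! (Suc j - 1) + xs ! (Suc L - Suc j - 1)"
        using bspec[OF H, of "Suc j"] j by simp
      then show "m \<le> ys ! j + ys ! (L - Suc j)"
        using j xl xs nth_mid1[of j ys m zs] nth_mid1[of "L - Suc j" ys m zs] by (simp add: L_def)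
    qed
  next
    assume H: "\<forall>j<L. m \<le> ys ! j + ys ! (L - Suc j)"
    show "\<forall>i\<in>{1..Suc L - 1}. xs ! (Suc L - 1) \<le> xs ! (i - 1) + xs ! (Suc L - i - 1)"
    proof
      fix i assume i: "i \<in> {1..Suc L - 1}"
      then obtain j where j: "i = Suc j" "j < L" by (cases i) auto
      show "xs ! (Suc L - 1) \<le> xs ! (i - 1) + xs ! (Suc L - i - 1)"
        using H j xl xs nth_mid1[of j ys m zs] nth_mid1[of "L - Suc j" ys m zs] by (simp add: L_def)
    qed
  qed
  have right: "(\<forall>i\<in>{1..length xs - Suc L}. xs ! (Suc L - 1) \<le> 1 + xs ! (Suc L + i - 1) + xs ! (length xs + 1 - i - 1))
      \<longleftrightarrow> (\<forall>j<K. m - 1 \<le> zs ! j + zs ! (K - Suc j))"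
  proof
    assume H: "\<forall>i\<in>{1..length xs - Suc L}. xs ! (Suc L - 1) \<le> 1 + xs ! (Suc L + i - 1) + xs ! (length xs + 1 - i - 1)"
    show "\<forall>j<K. m - 1 \<le> zs ! j + zs ! (K - Suc j)"
    proof (intro allI impI)
      fix j assume j: "j < K"
      have "xs ! (Suc L - 1) \<le> 1 + xs ! (Suc L + Suc j - 1) + xs ! (length xs + 1 - Suc j - 1)"
        using bspec[OF H, of "Suc j"] j n by simp
      moreover have "Suc L + Suc j - 1 = L + Suc j" by simp
      moreover have "length xs + 1 - Suc j - 1 = L + Suc (K - Suc j)" using n j by simp
      ultimately show "m - 1 \<le> zs ! j + zs ! (K - Suc j)"
        using xl xs nth_mid3[of ys m zs j] nth_mid3[of ys m zs "K - Suc j"] by (simp add: L_def)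
    qed
  next
    assume H: "\<forall>j<K. m - 1 \<le> zs ! j + zs ! (K - Suc j)"
    show "\<forall>i\<in>{1..length xs - Suc L}. xs ! (Suc L - 1) \<le> 1 + xs ! (Suc L + i - 1) + xs ! (length xs + 1 - i - 1)"
    proof
      fix i assume i: "i \<in> {1..length xs - Suc L}"
      then obtain j where j: "i = Suc j" "j < K" using n by (cases i) auto
      have "Suc L + Suc j - 1 = L + Suc j" by simp
      moreover have "length xs + 1 - Suc j - 1 = L + Suc (K - Suc j)" using n j by simp
      moreover have "m - 1 \<le> zs ! j + zs ! (K - Suc j)" using H j by simp
      ultimately show "xs ! (Suc L - 1) \<le> 1 + xs ! (Suc L + i - 1) + xs ! (length xs + 1 - i - 1)"
        using j xl xs nth_mid3[of ys m zs j] nth_mid3[of ys m zs "K - Suc j"] by (simp add: L_def)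
    qed
  qed
  show ?thesis
    unfolding weakly_admissible_def Let_def lm zip_rev_iff
    unfolding L_def[symmetric] K_def[symmetric]
    by (rule conj_cong[OF left right])
qed

lemma ac3: "(c::'a::comm_semiring_1) * (a * b) = a * c * b"
  by (simp add: ac_simps)

theorem proposition9p1:
  fixes \<mu> :: nat
  assumes "\<mu> \<ge> 2"
  shows "W_series \<mu> =
    (1 + (\<Sum>i = (\<mu> + 1) div 2..\<mu>. fps_X ^ i)) / (1 - I_series \<mu>)
    * fps_X ^ \<mu>
    * ((1 + (\<Sum>i = \<mu> div 2..\<mu> - 1. fps_X ^ i)) / (1 - I_series (\<mu> - 1)))"
proof -
  define S where "S = {xs. xs \<noteq> [] \<and> (\<forall>x\<in>set xs. 0 < x) \<and> weakly_admissible xs \<and> Max (set xs) = \<mu>}"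
  define A where "A = pal \<mu> \<mu>"
  define B where "B = pal (\<mu> - 1) (\<mu> - 1)"
  have W: "W_series \<mu> = wser S sum_list"
    unfolding W_series_def wser_def w_count_def composition_def S_def
    by (rule arg_cong[where f=Abs_fps]) (auto intro!: arg_cong[where f=card])
  have A_iff: "ys \<in> A \<longleftrightarrow> (\<forall>y\<in>set ys. 0 < y \<and> y \<le> \<mu>) \<and> (\<forall>(u,v)\<in>set (zip ys (rev ys)). \<mu> \<le> u + v)" for ys
    unfolding A_def pal_def by (auto simp: Suc_le_eq)
  have B_iff: "zs \<in> B \<longleftrightarrow> (\<forall>z\<in>set zs. 0 < z \<and> z < \<mu>) \<and> (\<forall>(u,v)\<in>set (zip zs (rev zs)). \<mu> - 1 \<le> u + v)" for zs
    unfolding B_def pal_def using assms by (auto simp: Suc_le_eq; force)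
  have bij: "bij_betw (\<lambda>(ys,zs). ys @ \<mu> # zs) (A \<times> B) S"
    unfolding bij_betw_def
  proof (intro conjI)
    show "inj_on (\<lambda>(ys,zs). ys @ \<mu> # zs) (A \<times> B)"
    proof (rule inj_onI)
      fix p q assume p: "p \<in> A \<times> B" and q: "q \<in> A \<times> B"
        and h: "(\<lambda>(ys,zs). ys @ \<mu> # zs) p = (\<lambda>(ys,zs). ys @ \<mu> # zs) q"
      obtain ys zs where pe: "p = (ys, zs)" by (cases p)
      obtain ys' zs' where qe: "q = (ys', zs')" by (cases q)
      have a: "(ys, zs) \<in> A \<times> B" "(ys', zs') \<in> A \<times> B" "ys @ \<mu> # zs = ys' @ \<mu> # zs'"
        using p q h pe qe by auto
      have "last_max_pos (ys @ \<mu> # zs) = Suc (length ys)"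
        by (rule decomp_props(2)[OF refl]) (use a in \<open>auto simp: A_iff B_iff\<close>)
      moreover have "last_max_pos (ys' @ \<mu> # zs') = Suc (length ys')"
        by (rule decomp_props(2)[OF refl]) (use a in \<open>auto simp: A_iff B_iff\<close>)
      ultimately have "length ys = length ys'" using a(3) by simp
      then show "p = q" using a(3) pe qe by simp
    qed
  next
    show "(\<lambda>(ys,zs). ys @ \<mu> # zs) ` (A \<times> B) = S"
    proof (intro equalityI subsetI)
      fix xs assume "xs \<in> (\<lambda>(ys,zs). ys @ \<mu> # zs) ` (A \<times> B)"
      then obtain ys zs where xs: "xs = ys @ \<mu> # zs" and ab: "ys \<in> A" "zs \<in> B" by auto
      have y: "\<forall>y\<in>set ys. y \<le> \<mu>" and z: "\<forall>z\<in>set zs. z < \<mu>" using ab by (auto simp: A_iff B_iff)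
      have "weakly_admissible xs" using wa_iff[OF xs y z] ab by (auto simp: A_iff B_iff)
      moreover have "Max (set xs) = \<mu>" using decomp_props(1)[OF xs y z] .
      moreover have "\<forall>x\<in>set xs. 0 < x" using xs ab assms by (auto simp: A_iff B_iff)
      ultimately show "xs \<in> S" unfolding S_def using xs by simp
    next
      fix xs assume "xs \<in> S"
      then have ne: "xs \<noteq> []" and pos: "\<forall>x\<in>set xs. 0 < x" and wa: "weakly_admissible xs"
        and mx: "Max (set xs) = \<mu>" unfolding S_def by auto
      have "\<mu> \<in> set xs" using mx ne by (metis Max_in finite_set set_empty)
      then obtain ys zs where xs: "xs = ys @ \<mu> # zs" and nz: "\<mu> \<notin> set zs"
        using split_list_last by metis
      have le: "\<forall>x\<in>set xs. x \<le> \<mu>" using mx by auto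
      have y: "\<forall>y\<in>set ys. y \<le> \<mu>" using le xs by auto
      have z: "\<forall>z\<in>set zs. z < \<mu>" using le xs nz by (auto simp: le_less)
      have "ys \<in> A" "zs \<in> B" using wa_iff[OF xs y z] wa y z pos xs by (auto simp: A_iff B_iff)
      then show "xs \<in> (\<lambda>(ys,zs). ys @ \<mu> # zs) ` (A \<times> B)" using xs by auto
    qed
  qed
  have "wser (A \<times> B) (\<lambda>p. (\<lambda>(ys,zs). sum_list ys + sum_list zs) p + \<mu>) = wser S sum_list"
    by (rule wser_bij[OF bij]) auto
  then have W2: "W_series \<mu> = fps_X ^ \<mu> * (wser A sum_list * wser B sum_list)"
    unfolding W wser_shift
    using wser_prod[of A sum_list B sum_list] ffib_posI[of A] ffib_posI[of B]
    by (auto simp: A_iff B_iff)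
  have m1: "{y. 1 \<le> y \<and> y \<le> \<mu> \<and> \<mu> \<le> y + y} = {(\<mu> + 1) div 2..\<mu>}" using assms by auto
  have m2: "{y. 1 \<le> y \<and> y \<le> \<mu> - 1 \<and> \<mu> - 1 \<le> y + y} = {\<mu> div 2..\<mu> - 1}" using assms by auto
  have i1: "I_series n = (\<Sum>(a,b)\<in>pairs n n. fps_X ^ (a + b))" for n
    unfolding I_series_def pairs_def by simp
  have PA: "wser A sum_list = (1 + (\<Sum>i = (\<mu> + 1) div 2..\<mu>. fps_X ^ i)) / (1 - I_series \<mu>)"
    unfolding A_def pal_series m1 i1[symmetric] by (rule refl)
  have PB: "wser B sum_list = (1 + (\<Sum>i = \<mu> div 2..\<mu> - 1. fps_X ^ i)) / (1 - I_series (\<mu> - 1))"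
    unfolding B_def pal_series m2 i1[symmetric] by (rule refl)
  show ?thesis unfolding W2 PA PB
    by (rule ac3)
qed

end
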